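(* Consider the misspecified Nash–Cournot game and Algorithm II described in the context, and suppose (A5), (A6), (A7) and (A8) of the context hold. Let $\{x_i^k,\hat\theta_i^k\}$, $i=1,\dots,N$, be computed by Algorithm II. Then for every $i=1,\dots,N$, $\hat\theta_i^k\to\theta^*$ almost surely and $x_i^k\to x^*$ almost surely as $k\to\infty$, where $x^*=(x_1^*,\dots,x_N^* )$ is the solution of the variational inequality: $x^*\in K=\prod_jK_j$ and $(y-x^* )^TF(x^* )\ge0$ for all $y\in K$, with $F_j(x)=c_j'(x_j)-a^*+b^*\sum_{l=1}^Nx_l+b^*x_j$.
   Context: Game: $N$ firms; firm $j$ chooses output $x_j\in K_j\subseteq[0,\infty)$ and minimizes $f_j(x;\theta)=c_j(x_j)-p(X)x_j$, where $X=\sum_{l}x_l$ and the true price is $p(X)=a^*-b^*X$ with $a^*,b^*>0$. For a vector $z=(z_1,\dots,z_N)$ of outputs, $Z=\sum_lz_l$ and a parameter value $\theta$, write $\nabla_{z_j}f_j(z;\theta)$ for the derivative of $c_j(z_j)-\hat p(Z;\theta)z_j$ in $z_j$, where $\hat p(Z;\theta)=\theta-b^*Z$ in case (A5a) and $\hat p(Z;\theta)=a^*-\theta Z$ in case (A5b). (A5) Exactly one of: (A5a) firms know $b^*$ but not $a^*$; the unknown parameter is $\theta^*=a^*$, and the price observed at output $X$ is $(a^*+\xi)-b^*X$; or (A5b) firms know $a^*$ but not $b^*$; $\theta^*=b^*$, and the observed price is $a^*-(b^*+\xi)X$. Here $\xi^1,\xi^2,\dots$ are i.i.d. real random variables with mean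 zero. (A6) (Common knowledge) All cost functions $c_j$ and sets $K_j$ are common knowledge; aggregate output is unobservable. (A7) Each $c_j$ is convex and continuously differentiable with $c_j'$ Lipschitz on $K_j$; $\Theta$ is closed, convex, bounded; each $K_j$ is nonempty, closed, convex, bounded. (A8) $\Theta=[\delta,\Delta]$ with $0<\delta<\theta^*+\xi^k<\Delta$ for all $k$; the $K_j$ are bounded. Also, at least one $K_j$ requires strictly positive output, so that estimated aggregates below are strictly positive. Algorithm II: given a positive sequence $\epsilon^k\downarrow0$ and constants $\gamma_x,\gamma_\theta>0$. Firm $j$'s actual initial output is $x_{jj}^0$, $X^0=\sum_jx_{jj}^0$, $p^0=a^*-b^*X^0$, and $\bar\vartheta_i^0=0$ for all $i$. At step $k\ge0$, each firm $i$ computes $x_i^{k+1}=(x_{i1}^{k+1},\dots,x_{iN}^{k+1})$ (its estimate of all firms' outputs) and $\theta_i^{k+1}$ as a solution of $x_{ij}^{k+1}=\Pi_{K_j}\big(x_{ij}^{k+1}-\gamma_x(\nabla_{x_{ij}}f_j(x_i^{k+1};\hat\theta_i^{k+1})+\epsilon^kx_{ij}^{k+1})\big)$, $j=1,\dots,N$, $\theta_i^{k+1}=\Pi_\Theta\big(\theta_i^{k+1}-\gamma_\theta(\tilde p_i^k+\epsilon^k\theta_i^{k+1})\big)$, where $\hat\theta_i^{k+1}=\frac{1}{k+1}\theta_i^{k+1}+\frac{k}{k+1}\bar\vartheta_i^k$, $X_i^{k+1}=\sum_jx_{ij}^{k+1}$, and $\tilde p_i^k=\hat p(X_i^{k+1};\hat\theta_i^{k+1})-p^k$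 in case (A5a), $\tilde p_i^k=p^k-\hat p(X_i^{k+1};\hat\theta_i^{k+1})$ in case (A5b). Firm $j$ actually produces $x_{jj}^{k+1}$; for $k\ge1$, $X^k=\sum_jx_{jj}^k$ and $p^k$ is the observed (noisy) price at $X^k$ with noise $\xi^k$. Each firm forms $\vartheta_i^k=p^k+b^*X_i^k$ in case (A5a) and $\vartheta_i^k=(a^*-p^k)/X_i^k$ in case (A5b), and updates $\bar\vartheta_i^k=((k-1)\bar\vartheta_i^{k-1}+\vartheta_i^k)/k$. $\Pi_C$ is Euclidean projection onto $C$. *)

theory Defs
  imports "HOL-Probability.Probability"
begin

text \<open>Estimated price  hat p(Z;theta): case (A5a) is encoded by caseA = True
  (unknown intercept, theta - b* Z), case (A5b) by caseA = False
  (unknown slope, a* - theta Z).\<close>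
definition phat :: "bool \<Rightarrow> real \<Rightarrow> real \<Rightarrow> real \<Rightarrow> real \<Rightarrow> real" where
  "phat caseA astar bstar \<theta> Z = (if caseA then \<theta> - bstar * Z else astar - \<theta> * Z)"

text \<open>Partial derivative in z_j of  c_j(z_j) - hat p(Z;theta) z_j, Z = sum_{l<N} z_l,
  with c' j the derivative of c j.\<close>
definition gradf :: "bool \<Rightarrow> real \<Rightarrow> real \<Rightarrow> (nat \<Rightarrow> real \<Rightarrow> real) \<Rightarrow> nat \<Rightarrow> nat
    \<Rightarrow> (nat \<Rightarrow> real) \<Rightarrow> real \<Rightarrow> real" where
  "gradf caseA astar bstar c' N j z \<theta> =
     c' j (z j) - phat caseA astar bstar \<theta> (\<Sum>l<N. z l)
     + (if caseA then bstar else \<theta>) * z j"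

definition Fvi :: "real \<Rightarrow> real \<Rightarrow> (nat \<Rightarrow> real \<Rightarrow> real) \<Rightarrow> nat \<Rightarrow> nat \<Rightarrow> (nat \<Rightarrow> real) \<Rightarrow> real" where
  "Fvi astar bstar c' N j z = c' j (z j) - astar + bstar * (\<Sum>l<N. z l) + bstar * z j"

end

theory Submission
  imports Defs
begin


lemma tangent_le:
  fixes f :: "real \<Rightarrow> real"
  assumes cv: "convex_on S f" and u: "u \<in> S" and v: "v \<in> S"
    and d: "(f has_real_derivative f') (at u)"
  shows "f' * (v - u) \<le> f v - f u"
proof (cases "u < v")
  case True
  have lim: "((\<lambda>y. (f y - f u) / (y - u)) \<longlongrightarrow> f') (at u within {u<..})"
    using has_field_derivative_at_within[OF d] has_field_derivative_iff by blast
  have "f' \<le> (f v - f u) / (v - u)"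
  proof (rule tendsto_upperbound[OF lim])
    show "at u within {u<..} \<noteq> bot" by simp
    have "eventually (\<lambda>y. y \<in> {u<..<v}) (at u within {u<..})"
      using True unfolding eventually_at_right_field by (intro exI[of _ v]) auto
    then show "eventually (\<lambda>y. (f y - f u) / (y - u) \<le> (f v - f u) / (v - u)) (at u within {u<..})"
    proof (rule eventually_mono)
      fix y assume y: "y \<in> {u<..<v}"
      define t where "t = (y - u) / (v - u)"
      have t: "0 \<le> t" "t \<le> 1" using y True by (auto simp: t_def field_simps)
      have "t * (v - u) = y - u" using True by (simp add: t_def)
      then have yeq: "y = (1 - t) *\<^sub>R u + t *\<^sub>R v" by (simp add: algebra_simps)
      have "f y \<le> (1 - t) * f u + t * f v" using convex_onD[OF cv t u v] yeq by simp
      then have "f y - f u \<le> t * (f v - f u)" by (simp add: algebra_simps)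
      then show "(f y - f u) / (y - u) \<le> (f v - f u) / (v - u)"
        using y True by (simp add: t_def field_simps)
    qed
  qed
  then show ?thesis using True by (simp add: field_simps)
next
  case False
  show ?thesis
  proof (cases "u = v")
    case True then show ?thesis by simp
  next
    case False2: False
    with False have vu: "v < u" by simp
    have lim: "((\<lambda>y. (f y - f u) / (y - u)) \<longlongrightarrow> f') (at u within {..<u})"
      using has_field_derivative_at_within[OF d] has_field_derivative_iff by blast
    have "(f v - f u) / (v - u) \<le> f'"
    proof (rule tendsto_lowerbound[OF lim])
      show "at u within {..<u} \<noteq> bot" by simp
      have "eventually (\<lambda>y. y \<in> {v<..<u}) (at u within {..<u})"
        using vu unfolding eventually_at_left_field by (intro exI[of _ v]) auto
      then show "eventually (\<lambda>y. (f v - f u) / (v - u) \<le> (f y - f u) / (y - u)) (at u within {..<u})"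
      proof (rule eventually_mono)
        fix y assume y: "y \<in> {v<..<u}"
        define t where "t = (u - y) / (u - v)"
        have t: "0 \<le> t" "t \<le> 1" using y vu by (auto simp: t_def field_simps)
        have "t * (u - v) = u - y" using vu by (simp add: t_def)
        then have yeq: "y = (1 - t) *\<^sub>R u + t *\<^sub>R v" by (simp add: algebra_simps)
        have "f y \<le> (1 - t) * f u + t * f v" using convex_onD[OF cv t u v] yeq by simp
        then have "f y - f u \<le> t * (f v - f u)" by (simp add: algebra_simps)
        then show "(f v - f u) / (v - u) \<le> (f y - f u) / (y - u)"
          using y vu by (simp add: t_def field_simps)
      qed
    qed
    then show ?thesis using vu by (simp add: field_simps)
  qed
qed

lemma deriv_mono:
  fixes f :: "real \<Rightarrow> real"
  assumes cv: "convex_on S f" and u: "u \<in> S" and v: "v \<in> S"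
    and du: "(f has_real_derivative f'u) (at u)" and dv: "(f has_real_derivative f'v) (at v)"
  shows "0 \<le> (f'v - f'u) * (v - u)"
  using tangent_le[OF cv u v du] tangent_le[OF cv v u dv] by (simp add: algebra_simps)

lemma proj_vi:
  fixes S :: "real set"
  assumes S: "closed S" "convex S" "S \<noteq> {}" and g: "0 < \<gamma>"
    and fx: "x = closest_point S (x - \<gamma> * g)"
  shows "x \<in> S" "\<forall>z\<in>S. 0 \<le> (z - x) * g"
proof -
  show xS: "x \<in> S" using closest_point_in_set[OF S(1) S(3)] fx by metis
  show "\<forall>z\<in>S. 0 \<le> (z - x) * g"
  proof
    fix z assume z: "z \<in> S"
    have "inner ((x - \<gamma> * g) - x) (z - x) \<le> 0"
      apply (rule any_closest_point_dot[OF S(2) S(1) xS z])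
      using closest_point_le[OF S(1)] fx by metis
    then have "0 \<le> \<gamma> * ((z - x) * g)" by (simp add: algebra_simps)
    then show "0 \<le> (z - x) * g" using g by (simp add: zero_le_mult_iff)
  qed
qed



lemma sumsq_zero:
  fixes d :: "nat \<Rightarrow> real"
  assumes "(\<Sum>j<N. d j * d j) \<le> 0"
  shows "\<forall>j<N. d j = 0"
proof -
  have "(\<Sum>j<N. d j * d j) = 0" using assms by (meson antisym sum_nonneg zero_le_square)
  then have "\<forall>j\<in>{..<N}. d j * d j = 0" by (subst (asm) sum_nonneg_eq_0_iff) auto
  then show ?thesis by simp
qed

lemma sum_helper:
  fixes d :: "nat \<Rightarrow> real"
  shows "(\<Sum>j<N. d j * A1 * A2 - B * d j * C - K * (d j * d j)) = (\<Sum>j<N. d j) * A1 * A2 - B * (\<Sum>j<N. d j) * C - K * (\<Sum>j<N. d j * d j)"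
  by (simp add: sum_subtractf sum_distrib_left sum_distrib_right mult_ac)

lemma sum_helper2:
  fixes d :: "nat \<Rightarrow> real"
  shows "(\<Sum>j<N. - B * d j * C - K * (d j * d j)) = - B * (\<Sum>j<N. d j) * C - K * (\<Sum>j<N. d j * d j)"
  by (simp add: sum_subtractf sum_distrib_left sum_distrib_right mult_ac sum_negf)

lemma uniqA:
  fixes x y :: "nat \<Rightarrow> real" and cp :: "nat \<Rightarrow> real \<Rightarrow> real"
  assumes t: "0 < t" and b: "0 < b" and e: "0 < \<epsilon>"
    and uw: "u - w = t * (\<theta>1 - \<theta>2)"
    and mono: "\<forall>j<N. 0 \<le> (cp j (y j) - cp j (x j)) * (y j - x j)"
    and vx: "\<forall>j<N. 0 \<le> (y j - x j) * (cp j (x j) - u + b * (\<Sum>l<N. x l) + b * x j + \<epsilon> * x j)"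
    and vy: "\<forall>j<N. 0 \<le> (x j - y j) * (cp j (y j) - w + b * (\<Sum>l<N. y l) + b * y j + \<epsilon> * y j)"
    and h1: "0 \<le> (\<theta>2 - \<theta>1) * (u - b * (\<Sum>l<N. x l) - p + \<epsilon> * \<theta>1)"
    and h2: "0 \<le> (\<theta>1 - \<theta>2) * (w - b * (\<Sum>l<N. y l) - p + \<epsilon> * \<theta>2)"
  shows "\<theta>1 = \<theta>2 \<and> (\<forall>j<N. x j = y j)"
proof -
  define S where "S = (\<Sum>l<N. y l) - (\<Sum>l<N. x l)"
  define D2 where "D2 = (\<Sum>j<N. (y j - x j) * (y j - x j))"
  define E where "E = \<theta>2 - \<theta>1"
  have pw: "\<forall>j<N. (y j - x j) * t * E - b * (y j - x j) * S - (b + \<epsilon>) * ((y j - x j) * (y j - x j)) \<ge> 0"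
  proof (intro allI impI)
    fix j assume j: "j < N"
    have "0 \<le> (y j - x j) * (cp j (x j) - u + b * (\<Sum>l<N. x l) + b * x j + \<epsilon> * x j)
            + (x j - y j) * (cp j (y j) - w + b * (\<Sum>l<N. y l) + b * y j + \<epsilon> * y j)
            + (cp j (y j) - cp j (x j)) * (y j - x j)"
      using vx vy mono j by (meson add_nonneg_nonneg)
    also have "\<dots> = (y j - x j) * (w - u) - b * (y j - x j) * S - (b + \<epsilon>) * ((y j - x j) * (y j - x j))"
      by (simp add: S_def algebra_simps)
    also have "w - u = t * E" using uw by (simp add: E_def algebra_simps)
    finally show "(y j - x j) * t * E - b * (y j - x j) * S - (b + \<epsilon>) * ((y j - x j) * (y j - x j)) \<ge> 0"
      by (simp add: algebra_simps)
  qed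
  have "0 \<le> (\<Sum>j<N. (y j - x j) * t * E - b * (y j - x j) * S - (b + \<epsilon>) * ((y j - x j) * (y j - x j)))"
    using pw by (intro sum_nonneg) auto
  also have "\<dots> = (\<Sum>j<N. y j - x j) * t * E - b * (\<Sum>j<N. y j - x j) * S - (b + \<epsilon>) * D2"
    unfolding D2_def by (rule sum_helper)
  also have "(\<Sum>j<N. y j - x j) = S" by (simp add: S_def sum_subtractf)
  finally have F1: "b * S * S + (b + \<epsilon>) * D2 \<le> t * E * S" by (simp add: mult_ac)
  have "0 \<le> (\<theta>2 - \<theta>1) * (u - b * (\<Sum>l<N. x l) - p + \<epsilon> * \<theta>1) + (\<theta>1 - \<theta>2) * (w - b * (\<Sum>l<N. y l) - p + \<epsilon> * \<theta>2)"
    using h1 h2 by simp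
  also have "\<dots> = E * (u - w) + b * E * S - \<epsilon> * E * E"
    by (simp add: E_def S_def algebra_simps)
  also have "u - w = - (t * E)" using uw by (simp add: E_def algebra_simps)
  finally have F2: "(t + \<epsilon>) * (E * E) \<le> b * E * S" by (simp add: algebra_simps)
  have F1': "b * (b * S * S) + b * ((b + \<epsilon>) * D2) \<le> b * (t * E * S)"
    using mult_left_mono[OF F1, of b] b by (simp add: algebra_simps)
  have F2': "t * ((t + \<epsilon>) * (E * E)) \<le> t * (b * E * S)"
    using mult_left_mono[OF F2, of t] t by simp
  have sq: "0 \<le> (b * S - t * E) * (b * S - t * E)" by simp
  have D2nn: "0 \<le> D2" unfolding D2_def by (intro sum_nonneg) simp
  have key: "b * ((b + \<epsilon>) * D2) + t * \<epsilon> * (E * E) \<le> 0"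
    using F1' F2' sq by (simp add: algebra_simps)
  have "0 \<le> b * ((b + \<epsilon>) * D2)" using b e D2nn by simp
  moreover have "0 \<le> t * \<epsilon> * (E * E)" using t e by simp
  ultimately have z1: "b * ((b + \<epsilon>) * D2) = 0" and z2: "t * \<epsilon> * (E * E) = 0" using key by linarith+
  from z1 b e have "D2 = 0" by simp
  then have "\<forall>j<N. y j - x j = 0" using sumsq_zero[of "\<lambda>j. y j - x j" N] by (simp add: D2_def)
  moreover from z2 t e have "E = 0" by simp
  ultimately show ?thesis by (simp add: E_def)
qed

lemma uniqB_agg:
  fixes x y :: "nat \<Rightarrow> real" and cp :: "nat \<Rightarrow> real \<Rightarrow> real"
  assumes w: "0 < w" and uw: "w \<le> u" and e: "0 < \<epsilon>"
    and xnn: "\<forall>j<N. 0 \<le> x j"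
    and mono: "\<forall>j<N. 0 \<le> (cp j (y j) - cp j (x j)) * (y j - x j)"
    and vx: "\<forall>j<N. 0 \<le> (y j - x j) * (cp j (x j) - a + u * (\<Sum>l<N. x l) + u * x j + \<epsilon> * x j)"
    and vy: "\<forall>j<N. 0 \<le> (x j - y j) * (cp j (y j) - a + w * (\<Sum>l<N. y l) + w * y j + \<epsilon> * y j)"
  shows "w * (\<Sum>l<N. y l) \<le> u * (\<Sum>l<N. x l)"
proof (rule ccontr)
  define X where "X = (\<Sum>l<N. x l)"
  define Y where "Y = (\<Sum>l<N. y l)"
  define D where "D = u * X - w * Y"
  define P where "P = {j. j < N \<and> 0 < y j - x j}"
  assume "\<not> ?thesis"
  then have Dneg: "D < 0" by (simp add: D_def X_def Y_def)
  have pw: "\<forall>j<N. w * (y j - x j) \<le> (if 0 < y j - x j then D + (u - w) * x j else 0)"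
  proof (intro allI impI)
    fix j assume j: "j < N"
    have "0 \<le> (y j - x j) * (cp j (x j) - a + u * X + u * x j + \<epsilon> * x j)
            + (x j - y j) * (cp j (y j) - a + w * Y + w * y j + \<epsilon> * y j)
            + (cp j (y j) - cp j (x j)) * (y j - x j)"
      using vx vy mono j unfolding X_def Y_def by (meson add_nonneg_nonneg)
    also have "\<dots> = (y j - x j) * (D + (u - w) * x j - w * (y j - x j)) - \<epsilon> * ((y j - x j) * (y j - x j))"
      by (simp add: D_def algebra_simps)
    finally have A: "\<epsilon> * ((y j - x j) * (y j - x j)) \<le> (y j - x j) * (D + (u - w) * x j - w * (y j - x j))"
      by simp
    have "0 \<le> \<epsilon> * ((y j - x j) * (y j - x j))" using e by simp
    with A have B: "0 \<le> (y j - x j) * (D + (u - w) * x j - w * (y j - x j))" by linarith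
    show "w * (y j - x j) \<le> (if 0 < y j - x j then D + (u - w) * x j else 0)"
    proof (cases "0 < y j - x j")
      case True
      then have "0 \<le> D + (u - w) * x j - w * (y j - x j)" using B by (simp add: zero_le_mult_iff)
      then show ?thesis using True by simp
    next
      case False
      then show ?thesis using w by (simp add: mult_nonneg_nonpos)
    qed
  qed
  have "w * (Y - X) = (\<Sum>j<N. w * (y j - x j))"
    by (simp add: X_def Y_def right_diff_distrib sum_subtractf sum_distrib_left)
  also have "\<dots> \<le> (\<Sum>j<N. (if 0 < y j - x j then D + (u - w) * x j else 0))"
    using pw by (intro sum_mono) auto
  also have "\<dots> = (\<Sum>j\<in>P. D + (u - w) * x j)"
    unfolding P_def by (simp add: sum.If_cases Int_def lessThan_def conj_commute)
  also have "\<dots> = real (card P) * D + (u - w) * (\<Sum>j\<in>P. x j)"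
    by (simp add: sum.distrib sum_distrib_left)
  also have "(\<Sum>j\<in>P. x j) \<le> X"
    unfolding X_def P_def using xnn by (intro sum_mono2) auto
  then have "(u - w) * (\<Sum>j\<in>P. x j) \<le> (u - w) * X" using uw by (intro mult_left_mono) auto
  finally have "w * (Y - X) \<le> real (card P) * D + (u - w) * X" by simp
  moreover have "w * (Y - X) = (u - w) * X - D" by (simp add: D_def algebra_simps)
  ultimately have "0 \<le> (real (card P) + 1) * D" by (simp add: algebra_simps)
  moreover have "(real (card P) + 1) * D < 0" using Dneg by (simp add: mult_pos_neg)
  ultimately show False by simp
qed

lemma uniqB:
  fixes x y :: "nat \<Rightarrow> real" and cp :: "nat \<Rightarrow> real \<Rightarrow> real"
  assumes t: "0 < t" and u: "0 < u" and w: "0 < w" and e: "0 < \<epsilon>"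
    and uw: "u - w = t * (\<theta>1 - \<theta>2)"
    and xnn: "\<forall>j<N. 0 \<le> x j" and ynn: "\<forall>j<N. 0 \<le> y j"
    and mono: "\<forall>j<N. 0 \<le> (cp j (y j) - cp j (x j)) * (y j - x j)"
    and vx: "\<forall>j<N. 0 \<le> (y j - x j) * (cp j (x j) - a + u * (\<Sum>l<N. x l) + u * x j + \<epsilon> * x j)"
    and vy: "\<forall>j<N. 0 \<le> (x j - y j) * (cp j (y j) - a + w * (\<Sum>l<N. y l) + w * y j + \<epsilon> * y j)"
    and h1: "0 \<le> (\<theta>2 - \<theta>1) * (p - a + u * (\<Sum>l<N. x l) + \<epsilon> * \<theta>1)"
    and h2: "0 \<le> (\<theta>1 - \<theta>2) * (p - a + w * (\<Sum>l<N. y l) + \<epsilon> * \<theta>2)"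
  shows "\<theta>1 = \<theta>2 \<and> (\<forall>j<N. x j = y j)"
proof -
  have mono': "\<forall>j<N. 0 \<le> (cp j (x j) - cp j (y j)) * (x j - y j)"
    using mono by (simp add: algebra_simps)
  have eqth: "\<theta>1 = \<theta>2"
  proof (rule ccontr)
    assume ne: "\<theta>1 \<noteq> \<theta>2"
    have sum: "0 \<le> (\<theta>2 - \<theta>1) * ((u * (\<Sum>l<N. x l) - w * (\<Sum>l<N. y l)) + \<epsilon> * (\<theta>1 - \<theta>2))"
      using add_nonneg_nonneg[OF h1 h2] by (simp add: algebra_simps)
    show False
    proof (cases "\<theta>2 < \<theta>1")
      case True
      have "0 < t * (\<theta>1 - \<theta>2)" using True t by simp
      then have "w \<le> u" using uw by linarith
      then have "w * (\<Sum>l<N. y l) \<le> u * (\<Sum>l<N. x l)"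
        using uniqB_agg[OF w _ e xnn mono vx vy] by blast
      then have "0 < (u * (\<Sum>l<N. x l) - w * (\<Sum>l<N. y l)) + \<epsilon> * (\<theta>1 - \<theta>2)"
        using True e by (simp add: add_nonneg_pos)
      then have "(\<theta>2 - \<theta>1) * ((u * (\<Sum>l<N. x l) - w * (\<Sum>l<N. y l)) + \<epsilon> * (\<theta>1 - \<theta>2)) < 0"
        using True by (simp add: mult_neg_pos)
      then show False using sum by simp
    next
      case False
      with ne have lt: "\<theta>1 < \<theta>2" by simp
      have "0 < t * (\<theta>2 - \<theta>1)" using lt t by simp
      then have "u \<le> w" using uw by (simp add: algebra_simps)
      then have "u * (\<Sum>l<N. x l) \<le> w * (\<Sum>l<N. y l)"
        using uniqB_agg[OF u _ e ynn mono' vy vx] by (simp add: algebra_simps)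
      then have "(u * (\<Sum>l<N. x l) - w * (\<Sum>l<N. y l)) + \<epsilon> * (\<theta>1 - \<theta>2) < 0"
        using lt e by (simp add: add_nonpos_neg mult_pos_neg)
      then have "(\<theta>2 - \<theta>1) * ((u * (\<Sum>l<N. x l) - w * (\<Sum>l<N. y l)) + \<epsilon> * (\<theta>1 - \<theta>2)) < 0"
        using lt by (simp add: mult_pos_neg)
      then show False using sum by simp
    qed
  qed
  then have uweq: "u = w" using uw by simp
  define S where "S = (\<Sum>l<N. y l) - (\<Sum>l<N. x l)"
  define D2 where "D2 = (\<Sum>j<N. (y j - x j) * (y j - x j))"
  have pw: "\<forall>j<N. - u * (y j - x j) * S - (u + \<epsilon>) * ((y j - x j) * (y j - x j)) \<ge> 0"
  proof (intro allI impI)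
    fix j assume j: "j < N"
    have "0 \<le> (y j - x j) * (cp j (x j) - a + u * (\<Sum>l<N. x l) + u * x j + \<epsilon> * x j)
            + (x j - y j) * (cp j (y j) - a + w * (\<Sum>l<N. y l) + w * y j + \<epsilon> * y j)
            + (cp j (y j) - cp j (x j)) * (y j - x j)"
      using vx vy mono j by (meson add_nonneg_nonneg)
    also have "\<dots> = - u * (y j - x j) * S - (u + \<epsilon>) * ((y j - x j) * (y j - x j))"
      using uweq by (simp add: S_def algebra_simps)
    finally show "- u * (y j - x j) * S - (u + \<epsilon>) * ((y j - x j) * (y j - x j)) \<ge> 0" .
  qed
  have "0 \<le> (\<Sum>j<N. - u * (y j - x j) * S - (u + \<epsilon>) * ((y j - x j) * (y j - x j)))"
    using pw by (intro sum_nonneg) auto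
  also have "\<dots> = - u * (\<Sum>j<N. y j - x j) * S - (u + \<epsilon>) * D2"
    unfolding D2_def by (rule sum_helper2)
  also have "(\<Sum>j<N. y j - x j) = S" by (simp add: S_def sum_subtractf)
  finally have F: "u * (S * S) + (u + \<epsilon>) * D2 \<le> 0" by (simp add: algebra_simps)
  have "0 \<le> u * (S * S)" using u by simp
  with F have "(u + \<epsilon>) * D2 \<le> 0" by linarith
  then have "D2 \<le> 0" using u e by (simp add: mult_le_0_iff)
  then have "\<forall>j<N. y j - x j = 0" using sumsq_zero[of "\<lambda>j. y j - x j" N] by (simp add: D2_def)
  with eqth show ?thesis by simp
qed



lemma alg_aux:
  fixes n m1 q :: real
  assumes "n \<noteq> 0" "m1 \<noteq> 0" "q \<noteq> 0"
  shows "-2 * (n / m1)\<^sup>2 / (n * q) = n * (- (2 / (m1\<^sup>2 * q)))"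
  using assms by (simp add: field_simps power2_eq_square)

lemma hoeff_loc:
  fixes \<xi> :: "nat \<Rightarrow> 'a \<Rightarrow> real"
  assumes M: "prob_space M"
    and meas: "\<And>k. k \<ge> 1 \<Longrightarrow> \<xi> k \<in> borel_measurable M"
    and ind: "prob_space.indep_vars M (\<lambda>_. borel) \<xi> {1..}"
    and ident: "\<And>k. k \<ge> 1 \<Longrightarrow> distr M borel (\<xi> k) = distr M borel (\<xi> 1)"
    and bnd': "\<And>k \<omega>. k \<ge> 1 \<Longrightarrow> \<omega> \<in> space M \<Longrightarrow> \<xi> k \<omega> \<in> {lo..hi}"
  shows "Hoeffding_ineq_iid M {1..n} \<xi> (\<xi> 1) lo hi"
proof -
  interpret prob_space M by (rule M)
  show ?thesis
  proof unfold_locales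
      show "finite {1..n}" by simp
      show "indep_vars (\<lambda>_. borel) \<xi> {1..n}"
        using ind by (rule indep_vars_subset) auto
      show "\<And>i. i \<in> {1..n} \<Longrightarrow> distr M borel (\<xi> i) = distr M borel (\<xi> 1)" by (rule ident) auto
      show "random_variable borel (\<xi> 1)" using meas by simp
      show "AE x in M. \<xi> 1 x \<in> {lo..hi}" using bnd' by (intro AE_I2) auto
  qed
qed

lemma slln_bounded:
  fixes \<xi> :: "nat \<Rightarrow> 'a \<Rightarrow> real"
  assumes M: "prob_space M"
    and meas: "\<And>k. k \<ge> 1 \<Longrightarrow> \<xi> k \<in> borel_measurable M"
    and ind: "prob_space.indep_vars M (\<lambda>_. borel) \<xi> {1..}"
    and ident: "\<And>k. k \<ge> 1 \<Longrightarrow> distr M borel (\<xi> k) = distr M borel (\<xi> 1)"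
    and bnd: "\<And>k \<omega>. k \<ge> 1 \<Longrightarrow> \<omega> \<in> space M \<Longrightarrow> lo \<le> \<xi> k \<omega> \<and> \<xi> k \<omega> \<le> hi0"
    and mean: "(\<integral>\<omega>. \<xi> 1 \<omega> \<partial>M) = 0"
  shows "AE \<omega> in M. (\<lambda>n. (\<Sum>k\<in>{1..n}. \<xi> k \<omega>) / real n) \<longlonglongrightarrow> 0"
proof -
  interpret prob_space M by (rule M)
  define hi where "hi = max hi0 (lo + 1)"
  have lohi: "lo < hi" by (simp add: hi_def)
  have bnd': "\<And>k \<omega>. k \<ge> 1 \<Longrightarrow> \<omega> \<in> space M \<Longrightarrow> \<xi> k \<omega> \<in> {lo..hi}"
    using bnd unfolding hi_def by fastforce
  have summeas: "(\<lambda>\<omega>. \<Sum>k\<in>{1..n}. \<xi> k \<omega>) \<in> borel_measurable M" for n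
    by (rule borel_measurable_sum) (use meas in auto)
  define c where "c m = 2 / ((real m + 1)\<^sup>2 * (hi - lo)\<^sup>2)" for m :: nat
  have cpos: "0 < c m" for m using lohi by (simp add: c_def)
  define A where "A m n = {\<omega>\<in>space M. real n / (real m + 1) \<le> \<bar>\<Sum>k\<in>{1..n}. \<xi> k \<omega>\<bar>}" for m n :: nat
  have Ameas: "A m n \<in> sets M" for m n
  proof -
    have [measurable]: "(\<lambda>\<omega>. \<Sum>k\<in>{1..n}. \<xi> k \<omega>) \<in> borel_measurable M" by (rule summeas)
    show ?thesis unfolding A_def by measurable
  qed
  have Abound: "measure M (A m n) \<le> 2 * exp (- c m) ^ n" for m n
  proof (cases "n = 0")
    case True
    have "measure M (A m n) \<le> 1" by (rule prob_le_1)
    then show ?thesis unfolding True power_0 by linarith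
  next
    case False
    have e: "0 \<le> real n / (real m + 1)" by simp
    have ne: "{1..n} \<noteq> {}" using False by simp
    have HH: "prob {x\<in>space M. real n / (real m + 1) \<le> \<bar>(\<Sum>i\<in>{1..n}. \<xi> i x) - real (card {1..n}) * expectation (\<xi> 1)\<bar>}
       \<le> 2 * exp (-2 * (real n / (real m + 1))\<^sup>2 / (real (card {1..n}) * (hi - lo)\<^sup>2))"
      by (rule Hoeffding_ineq_iid.Hoeffding_ineq_abs_ge[OF hoeff_loc[OF M meas ind ident bnd'] e lohi ne])
    have ex0: "expectation (\<xi> 1) = 0" using mean by simp
    have "measure M (A m n) \<le> 2 * exp (-2 * (real n / (real m + 1))\<^sup>2 / (real (card {1..n}) * (hi - lo)\<^sup>2))"
      using HH unfolding A_def ex0 by simp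
    also have "-2 * (real n / (real m + 1))\<^sup>2 / (real (card {1..n}) * (hi - lo)\<^sup>2) = real n * (- c m)"
    proof -
      have n0: "real n \<noteq> 0" using False by simp
      have m0: "real m + 1 \<noteq> 0" by (simp add: add.commute)
      have hl: "hi - lo \<noteq> 0" using lohi by simp
      have "card {1..n} = n" by simp
      then show ?thesis using alg_aux[OF n0 m0, of "(hi - lo)\<^sup>2"] hl by (simp add: c_def)
    qed
    also have "exp (real n * (- c m)) = exp (- c m) ^ n" by (rule exp_of_nat_mult)
    finally show ?thesis .
  qed
  have summ: "summable (\<lambda>n. measure M (A m n))" for m
  proof (rule summable_comparison_test')
    show "summable (\<lambda>n. 2 * exp (- c m) ^ n)"
      using cpos[of m] by (intro summable_mult summable_geometric) simp
    show "norm (measure M (A m n)) \<le> 2 * exp (- c m) ^ n" for n using Abound by simp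
  qed
  have "AE \<omega> in M. eventually (\<lambda>n. \<omega> \<in> space M - A m n) sequentially" for m
    by (rule borel_cantelli_AE1) (auto simp: Ameas summ emeasure_eq_measure)
  then have "AE \<omega> in M. \<forall>m. eventually (\<lambda>n. \<omega> \<in> space M - A m n) sequentially"
    by (subst AE_all_countable) auto
  then show ?thesis
  proof (rule AE_mp[OF _ AE_I2], intro impI)
    fix \<omega> assume \<omega>: "\<omega> \<in> space M" and ev: "\<forall>m. eventually (\<lambda>n. \<omega> \<in> space M - A m n) sequentially"
    show "(\<lambda>n. (\<Sum>k\<in>{1..n}. \<xi> k \<omega>) / real n) \<longlonglongrightarrow> 0"
    proof (rule LIMSEQ_I)
      fix r :: real assume r: "0 < r"
      obtain m where m: "inverse (real (Suc m)) < r" using reals_Archimedean[OF r] by blast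
      from ev[rule_format, of m] obtain n0 where n0: "\<And>n. n \<ge> n0 \<Longrightarrow> \<omega> \<in> space M - A m n"
        by (auto simp: eventually_sequentially)
      show "\<exists>no. \<forall>n\<ge>no. norm ((\<Sum>k\<in>{1..n}. \<xi> k \<omega>) / real n - 0) < r"
      proof (intro exI allI impI)
        fix n assume n: "n \<ge> max n0 1"
        then have "\<omega> \<notin> A m n" using n0 by auto
        then have lt: "\<bar>\<Sum>k\<in>{1..n}. \<xi> k \<omega>\<bar> < real n / (real m + 1)" using \<omega> by (auto simp: A_def)
        have npos: "0 < real n" using n by simp
        have "\<bar>(\<Sum>k\<in>{1..n}. \<xi> k \<omega>) / real n\<bar> < 1 / (real m + 1)"
          using lt npos by (simp add: abs_divide divide_less_eq field_simps)
        also have "1 / (real m + 1) < r" using m by (simp add: inverse_eq_divide add.commute)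
        finally show "norm ((\<Sum>k\<in>{1..n}. \<xi> k \<omega>) / real n - 0) < r" by simp
      qed
    qed
  qed
qed



lemma vi_bound:
  fixes z xs :: "nat \<Rightarrow> real" and G :: "nat \<Rightarrow> real"
  assumes b: "0 < bstar"
    and zK: "\<forall>j<N. z j \<in> K j" and xsK: "\<forall>j<N. xs j \<in> K j"
    and viz: "\<forall>j<N. 0 \<le> (xs j - z j) * G j"
    and xs_VI: "\<forall>y. (\<forall>j<N. y j \<in> K j) \<longrightarrow> (\<Sum>j<N. (y j - xs j) * Fvi astar bstar c' N j xs) \<ge> 0"
    and mono: "\<forall>j<N. \<forall>u\<in>K j. \<forall>v\<in>K j. 0 \<le> (c' j v - c' j u) * (v - u)"
  shows "bstar * (\<Sum>j<N. (z j - xs j) * (z j - xs j)) \<le> (\<Sum>j<N. (z j - xs j) * (Fvi astar bstar c' N j z - G j))"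
proof -
  define d where "d j = z j - xs j" for j
  define S where "S = (\<Sum>j<N. d j)"
  have s1: "0 \<le> (\<Sum>j<N. d j * Fvi astar bstar c' N j xs)"
    using xs_VI zK unfolding d_def by blast
  have s2: "0 \<le> (\<Sum>j<N. - d j * G j)"
    using viz unfolding d_def by (intro sum_nonneg) (simp add: algebra_simps)
  have pw: "d j * (Fvi astar bstar c' N j xs - Fvi astar bstar c' N j z)
      = - ((c' j (z j) - c' j (xs j)) * (z j - xs j)) - bstar * d j * S - bstar * (d j * d j)" for j
    unfolding Fvi_def d_def S_def by (simp add: sum_subtractf algebra_simps)
  have "(\<Sum>j<N. d j * (Fvi astar bstar c' N j xs - Fvi astar bstar c' N j z))
      = (\<Sum>j<N. - ((c' j (z j) - c' j (xs j)) * (z j - xs j))) - bstar * S * S - bstar * (\<Sum>j<N. d j * d j)"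
    unfolding pw by (simp add: sum_subtractf sum_distrib_left sum_distrib_right S_def mult_ac)
  also have "\<dots> \<le> - bstar * S * S - bstar * (\<Sum>j<N. d j * d j)"
  proof -
    have "(\<Sum>j<N. - ((c' j (z j) - c' j (xs j)) * (z j - xs j))) \<le> 0"
      using mono zK xsK by (intro sum_nonpos) auto
    then show ?thesis by simp
  qed
  also have "\<dots> \<le> - bstar * (\<Sum>j<N. d j * d j)"
    using b by (simp add: mult.assoc)
  finally have s3: "(\<Sum>j<N. d j * (Fvi astar bstar c' N j xs - Fvi astar bstar c' N j z)) \<le> - bstar * (\<Sum>j<N. d j * d j)" .
  have "(\<Sum>j<N. d j * Fvi astar bstar c' N j xs) + (\<Sum>j<N. - d j * G j)
      = (\<Sum>j<N. d j * (Fvi astar bstar c' N j xs - Fvi astar bstar c' N j z)) + (\<Sum>j<N. d j * (Fvi astar bstar c' N j z - G j))"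
    by (simp add: sum.distrib[symmetric] algebra_simps)
  then show ?thesis using s1 s2 s3 unfolding d_def by linarith
qed



lemma resid_bound:
  fixes z :: "nat \<Rightarrow> real"
  assumes B: "0 \<le> B" and zb: "\<forall>j<N. \<bar>z j\<bar> \<le> B" and j: "j < N"
  shows "\<bar>Fvi astar bstar c' N j z - (gradf caseA astar bstar c' N j z th + e * z j)\<bar>
     \<le> \<bar>th - (if caseA then astar else bstar)\<bar> * (real N * B + B + 1) + \<bar>e\<bar> * B"
proof -
  have Z: "\<bar>\<Sum>l<N. z l\<bar> \<le> real N * B"
  proof -
    have "\<bar>\<Sum>l<N. z l\<bar> \<le> (\<Sum>l<N. \<bar>z l\<bar>)" by (rule sum_abs)
    also have "\<dots> \<le> (\<Sum>l<N. B)" using zb by (intro sum_mono) auto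
    finally show ?thesis by simp
  qed
  have zj: "\<bar>z j\<bar> \<le> B" using zb j by auto
  have ez: "\<bar>e * z j\<bar> \<le> \<bar>e\<bar> * B" using zj by (simp add: abs_mult mult_left_mono)
  show ?thesis
  proof (cases caseA)
    case True
    have eq: "Fvi astar bstar c' N j z - (gradf caseA astar bstar c' N j z th + e * z j) = (th - astar) - e * z j"
      using True by (simp add: Fvi_def gradf_def phat_def algebra_simps)
    have "\<bar>th - astar\<bar> \<le> \<bar>th - astar\<bar> * (real N * B + B + 1)"
      using B by (simp add: mult_le_cancel_left1)
    then show ?thesis using True eq ez by (simp add: abs_diff_le_iff) (smt (verit) abs_triangle_ineq4)
  next
    case False
    have eq: "Fvi astar bstar c' N j z - (gradf caseA astar bstar c' N j z th + e * z j)
        = (bstar - th) * ((\<Sum>l<N. z l) + z j) - e * z j"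
      using False by (simp add: Fvi_def gradf_def phat_def algebra_simps)
    have "\<bar>(bstar - th) * ((\<Sum>l<N. z l) + z j)\<bar> \<le> \<bar>th - bstar\<bar> * (real N * B + B)"
    proof -
      have "\<bar>(\<Sum>l<N. z l) + z j\<bar> \<le> real N * B + B" using Z zj by linarith
      then show ?thesis by (simp add: abs_mult abs_minus_commute mult_left_mono)
    qed
    also have "\<dots> \<le> \<bar>th - bstar\<bar> * (real N * B + B + 1)" by (simp add: mult_left_mono)
    finally show ?thesis using False eq ez by (smt (verit) abs_triangle_ineq4)
  qed
qed

lemma tik_conv:
  fixes xk :: "nat \<Rightarrow> nat \<Rightarrow> real" and th \<epsilon> :: "nat \<Rightarrow> real" and xs :: "nat \<Rightarrow> real"
  assumes b: "0 < bstar" and B: "0 \<le> B" and Bd: "\<forall>j<N. \<forall>v\<in>K j. \<bar>v\<bar> \<le> B"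
    and xK: "\<forall>k. \<forall>j<N. xk k j \<in> K j"
    and vi: "\<forall>k. \<forall>j<N. 0 \<le> (xs j - xk k j) * (gradf caseA astar bstar c' N j (xk k) (th k) + \<epsilon> k * xk k j)"
    and xsK: "\<forall>j<N. xs j \<in> K j"
    and xs_VI: "\<forall>y. (\<forall>j<N. y j \<in> K j) \<longrightarrow> (\<Sum>j<N. (y j - xs j) * Fvi astar bstar c' N j xs) \<ge> 0"
    and mono: "\<forall>j<N. \<forall>u\<in>K j. \<forall>v\<in>K j. 0 \<le> (c' j v - c' j u) * (v - u)"
    and thl: "th \<longlonglongrightarrow> (if caseA then astar else bstar)" and el: "\<epsilon> \<longlonglongrightarrow> 0"
  shows "\<forall>j<N. (\<lambda>k. xk k j) \<longlonglongrightarrow> xs j"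
proof -
  define \<theta>s where "\<theta>s = (if caseA then astar else bstar)"
  define R where "R k = \<bar>th k - \<theta>s\<bar> * (real N * B + B + 1) + \<bar>\<epsilon> k\<bar> * B" for k
  have R0: "R \<longlonglongrightarrow> 0"
  proof -
    have "(\<lambda>k. \<bar>th k - \<theta>s\<bar>) \<longlonglongrightarrow> 0" using thl unfolding \<theta>s_def
      by (simp add: LIM_zero tendsto_rabs_zero)
    moreover have "(\<lambda>k. \<bar>\<epsilon> k\<bar>) \<longlonglongrightarrow> 0" using el by (simp add: tendsto_rabs_zero)
    ultimately have "(\<lambda>k. \<bar>th k - \<theta>s\<bar> * (real N * B + B + 1) + \<bar>\<epsilon> k\<bar> * B) \<longlonglongrightarrow> 0 * (real N * B + B + 1) + 0 * B"
      by (intro tendsto_intros)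
    then show ?thesis unfolding R_def[abs_def] by simp
  qed
  show ?thesis
  proof (intro allI impI)
    fix j assume j: "j < N"
    have bound: "(xk k j - xs j) * (xk k j - xs j) \<le> (real N * (2 * B) * R k) / bstar" for k
    proof -
      define G where "G j' = gradf caseA astar bstar c' N j' (xk k) (th k) + \<epsilon> k * xk k j'" for j'
      have vb: "bstar * (\<Sum>j<N. (xk k j - xs j) * (xk k j - xs j)) \<le> (\<Sum>j<N. (xk k j - xs j) * (Fvi astar bstar c' N j (xk k) - G j))"
        by (rule vi_bound[OF b _ xsK _ xs_VI mono]) (use xK vi in \<open>auto simp: G_def\<close>)
      have zb: "\<forall>j<N. \<bar>xk k j\<bar> \<le> B" using xK Bd by blast
      have "(\<Sum>j<N. (xk k j - xs j) * (Fvi astar bstar c' N j (xk k) - G j)) \<le> (\<Sum>j<N. (2 * B) * R k)"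
      proof (rule sum_mono)
        fix j' assume j': "j' \<in> {..<N}"
        have d: "\<bar>xk k j' - xs j'\<bar> \<le> 2 * B" using Bd xK xsK j' by (smt (verit) lessThan_iff)
        have r: "\<bar>Fvi astar bstar c' N j' (xk k) - G j'\<bar> \<le> R k"
          unfolding G_def R_def \<theta>s_def using resid_bound[OF B zb] j' by auto
        have "(xk k j' - xs j') * (Fvi astar bstar c' N j' (xk k) - G j') \<le> \<bar>xk k j' - xs j'\<bar> * \<bar>Fvi astar bstar c' N j' (xk k) - G j'\<bar>"
          by (simp add: abs_mult[symmetric])
        also have "\<dots> \<le> (2 * B) * R k" using d r by (intro mult_mono) auto
        finally show "(xk k j' - xs j') * (Fvi astar bstar c' N j' (xk k) - G j') \<le> (2 * B) * R k" .
      qed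
      also have "\<dots> = real N * (2 * B) * R k" by simp
      finally have s: "bstar * (\<Sum>j<N. (xk k j - xs j) * (xk k j - xs j)) \<le> real N * (2 * B) * R k"
        using vb by linarith
      have "(xk k j - xs j) * (xk k j - xs j) \<le> (\<Sum>j<N. (xk k j - xs j) * (xk k j - xs j))"
        using j by (intro member_le_sum) auto
      then have "bstar * ((xk k j - xs j) * (xk k j - xs j)) \<le> real N * (2 * B) * R k"
        using s b by (smt (verit) mult_left_mono)
      then show ?thesis using b by (simp add: pos_le_divide_eq mult.commute)
    qed
    have sq: "(\<lambda>k. (xk k j - xs j) * (xk k j - xs j)) \<longlonglongrightarrow> 0"
    proof (rule tendsto_sandwich[of "\<lambda>_. 0" _ _ "\<lambda>k. (real N * (2 * B) * R k) / bstar"])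
      show "eventually (\<lambda>k. 0 \<le> (xk k j - xs j) * (xk k j - xs j)) sequentially" by simp
      show "eventually (\<lambda>k. (xk k j - xs j) * (xk k j - xs j) \<le> (real N * (2 * B) * R k) / bstar) sequentially"
        using bound by simp
      show "(\<lambda>k. 0::real) \<longlonglongrightarrow> 0" by simp
      have "(\<lambda>k. (real N * (2 * B) * R k) / bstar) \<longlonglongrightarrow> (real N * (2 * B) * 0) / bstar"
        by (intro tendsto_intros R0) (use b in simp)
      then show "(\<lambda>k. (real N * (2 * B) * R k) / bstar) \<longlonglongrightarrow> 0" by simp
    qed
    have "(\<lambda>k. sqrt ((xk k j - xs j) * (xk k j - xs j))) \<longlonglongrightarrow> sqrt 0"
      by (intro tendsto_intros sq)
    then have "(\<lambda>k. \<bar>xk k j - xs j\<bar>) \<longlonglongrightarrow> 0" by (simp add: real_sqrt_mult_self)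
    then have "(\<lambda>k. xk k j - xs j) \<longlonglongrightarrow> 0" by (simp add: tendsto_rabs_zero_iff)
    then show "(\<lambda>k. xk k j) \<longlonglongrightarrow> xs j" by (simp add: LIM_zero_iff)
  qed
qed



lemma gradf_A: "caseA \<Longrightarrow> gradf caseA a b c' N j z th = c' j (z j) - th + b * (\<Sum>l<N. z l) + b * z j"
  by (simp add: gradf_def phat_def)
lemma gradf_B: "\<not> caseA \<Longrightarrow> gradf caseA a b c' N j z th = c' j (z j) - a + th * (\<Sum>l<N. z l) + th * z j"
  by (simp add: gradf_def phat_def)
lemma hA: "caseA \<Longrightarrow> phat caseA a b th X - p = th - b * X - p"
  by (simp add: phat_def)
lemma hB: "\<not> caseA \<Longrightarrow> p - phat caseA a b th X = p - a + th * X"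
  by (simp add: phat_def)

lemma det_main:
  fixes N :: nat and K :: "nat \<Rightarrow> real set" and c c' :: "nat \<Rightarrow> real \<Rightarrow> real"
    and astar bstar \<delta> \<Delta> \<gamma>x \<gamma>\<theta> \<theta>s :: real and \<epsilon> :: "nat \<Rightarrow> real" and caseA :: bool
    and \<xi> :: "nat \<Rightarrow> real" and x :: "nat \<Rightarrow> nat \<Rightarrow> nat \<Rightarrow> real"
    and \<theta> \<theta>hat vt vtbar :: "nat \<Rightarrow> nat \<Rightarrow> real" and p :: "nat \<Rightarrow> real" and xs :: "nat \<Rightarrow> real"
  assumes \<theta>s: "\<theta>s = (if caseA then astar else bstar)"
    and ab: "0 < astar" "0 < bstar"
    and K: "\<forall>j<N. K j \<noteq> {} \<and> closed (K j) \<and> convex (K j) \<and> bounded (K j) \<and> K j \<subseteq> {0..}"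
    and Kpos: "\<exists>j<N. \<forall>v\<in>K j. 0 < v"
    and c_conv: "\<forall>j<N. convex_on (K j) (c j)"
    and c_deriv: "\<forall>j<N. \<forall>v\<in>K j. (c j has_real_derivative c' j v) (at v)"
    and \<delta>: "0 < \<delta>"
    and A8: "\<forall>k\<ge>1. \<delta> < \<theta>s + \<xi> k \<and> \<theta>s + \<xi> k < \<Delta>"
    and slln: "(\<lambda>n. (\<Sum>k\<in>{1..n}. \<xi> k) / real n) \<longlonglongrightarrow> 0"
    and \<epsilon>_pos: "\<forall>k. 0 < \<epsilon> k" and \<epsilon>_lim: "\<epsilon> \<longlonglongrightarrow> 0"
    and \<gamma>: "0 < \<gamma>x" "0 < \<gamma>\<theta>"
    and vtbar0: "\<forall>i<N. vtbar i 0 = 0"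
    and x_step: "\<forall>i<N. \<forall>k. \<forall>j<N.
       x i (Suc k) j = closest_point (K j)
         (x i (Suc k) j - \<gamma>x * (gradf caseA astar bstar c' N j (x i (Suc k)) (\<theta>hat i (Suc k))
                                   + \<epsilon> k * x i (Suc k) j))"
    and \<theta>_step: "\<forall>i<N. \<forall>k.
       \<theta> i (Suc k) = closest_point {\<delta>..\<Delta>}
         (\<theta> i (Suc k) - \<gamma>\<theta> *
            ((if caseA
              then phat caseA astar bstar (\<theta>hat i (Suc k)) (\<Sum>j<N. x i (Suc k) j) - p k
              else p k - phat caseA astar bstar (\<theta>hat i (Suc k)) (\<Sum>j<N. x i (Suc k) j))
             + \<epsilon> k * \<theta> i (Suc k)))"
    and \<theta>hat_def: "\<forall>i<N. \<forall>k.
       \<theta>hat i (Suc k) = \<theta> i (Suc k) / real (Suc k) + real k / real (Suc k) * vtbar i k"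
    and p_step: "\<forall>k\<ge>1.
       p k = (if caseA then (astar + \<xi> k) - bstar * (\<Sum>j<N. x j k j)
                 else astar - (bstar + \<xi> k) * (\<Sum>j<N. x j k j))"
    and vt_def: "\<forall>i<N. \<forall>k\<ge>1.
       vt i k = (if caseA then p k + bstar * (\<Sum>j<N. x i k j)
                     else (astar - p k) / (\<Sum>j<N. x i k j))"
    and vtbar_step: "\<forall>i<N. \<forall>k\<ge>1.
       vtbar i k = ((real k - 1) * vtbar i (k - 1) + vt i k) / real k"
    and xs_K: "\<forall>j<N. xs j \<in> K j"
    and xs_VI: "\<forall>y. (\<forall>j<N. y j \<in> K j) \<longrightarrow> (\<Sum>j<N. (y j - xs j) * Fvi astar bstar c' N j xs) \<ge> 0"
  shows "\<forall>i<N. (\<lambda>k. \<theta>hat i k) \<longlonglongrightarrow> \<theta>s \<and> (\<forall>j<N. (\<lambda>k. x i k j) \<longlonglongrightarrow> xs j)"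
proof -
  obtain j0 where j0: "j0 < N" "\<forall>v\<in>K j0. 0 < v" using Kpos by blast
  have \<delta>\<Delta>: "\<delta> \<le> \<Delta>" using A8 by (metis order.refl order_less_imp_le order_less_trans)
  have Th: "closed {\<delta>..\<Delta>}" "convex {\<delta>..\<Delta>}" "{\<delta>..\<Delta>} \<noteq> {}" using \<delta>\<Delta> by auto
  have xVI: "x i (Suc k) j \<in> K j \<and> (\<forall>z\<in>K j. 0 \<le> (z - x i (Suc k) j) *
      (gradf caseA astar bstar c' N j (x i (Suc k)) (\<theta>hat i (Suc k)) + \<epsilon> k * x i (Suc k) j))"
    if i: "i < N" and j: "j < N" for i k j
  proof -
    have KK: "closed (K j)" "convex (K j)" "K j \<noteq> {}" using K j by auto
    show ?thesis using proj_vi[OF KK \<gamma>(1) x_step[rule_format, OF i j, of k]] by blast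
  qed
  define H where "H i k = (if caseA
              then phat caseA astar bstar (\<theta>hat i (Suc k)) (\<Sum>j<N. x i (Suc k) j) - p k
              else p k - phat caseA astar bstar (\<theta>hat i (Suc k)) (\<Sum>j<N. x i (Suc k) j))" for i k
  have thVI: "\<theta> i (Suc k) \<in> {\<delta>..\<Delta>} \<and> (\<forall>z\<in>{\<delta>..\<Delta>}. 0 \<le> (z - \<theta> i (Suc k)) * (H i k + \<epsilon> k * \<theta> i (Suc k)))"
    if i: "i < N" for i k
    using proj_vi[OF Th \<gamma>(2) \<theta>_step[rule_format, OF i, of k]] unfolding H_def by blast
  have mono: "\<forall>j<N. \<forall>u\<in>K j. \<forall>v\<in>K j. 0 \<le> (c' j v - c' j u) * (v - u)"
    using deriv_mono c_conv c_deriv by blast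
  have xnn: "0 \<le> x i (Suc k) j" if "i < N" "j < N" for i k j
    using xVI[OF that, of k] K that by auto
  have Xpos: "0 < (\<Sum>j<N. x i (Suc k) j)" if i: "i < N" for i k
  proof -
    have "x i (Suc k) j0 \<le> (\<Sum>j<N. x i (Suc k) j)"
      using j0 xnn[OF i] by (intro member_le_sum) auto
    moreover have "0 < x i (Suc k) j0" using j0 xVI[OF i j0(1), of k] by auto
    ultimately show ?thesis by linarith
  qed
  have uniq: "\<theta> i (Suc k) = \<theta> i' (Suc k) \<and> (\<forall>j<N. x i (Suc k) j = x i' (Suc k) j)"
    if i: "i < N" and i': "i' < N" and eqv: "vtbar i k = vtbar i' k" and nnv: "0 \<le> vtbar i k" for i i' k
  proof -
    define t where "t = 1 / real (Suc k)"
    have t: "0 < t" by (simp add: t_def)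
    have uw: "\<theta>hat i (Suc k) - \<theta>hat i' (Suc k) = t * (\<theta> i (Suc k) - \<theta> i' (Suc k))"
      using \<theta>hat_def i i' eqv by (simp add: t_def diff_divide_distrib)
    have upos: "0 < \<theta>hat i'' (Suc k)" if "i'' < N" "vtbar i'' k = vtbar i k" for i''
    proof -
      have "0 < \<theta> i'' (Suc k) / real (Suc k)" using thVI[OF that(1), of k] \<delta> by auto
      moreover have "0 \<le> real k / real (Suc k) * vtbar i'' k" using nnv that(2) by simp
      ultimately show ?thesis using \<theta>hat_def that(1) by simp
    qed
    have mono': "\<forall>j<N. 0 \<le> (c' j (x i' (Suc k) j) - c' j (x i (Suc k) j)) * (x i' (Suc k) j - x i (Suc k) j)"
      using mono xVI i i' by blast
    have V1: "0 \<le> (x i' (Suc k) j - x i (Suc k) j) *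
      (gradf caseA astar bstar c' N j (x i (Suc k)) (\<theta>hat i (Suc k)) + \<epsilon> k * x i (Suc k) j)" if "j < N" for j
      using xVI[OF i that, of k] xVI[OF i' that, of k] by blast
    have V2: "0 \<le> (x i (Suc k) j - x i' (Suc k) j) *
      (gradf caseA astar bstar c' N j (x i' (Suc k)) (\<theta>hat i' (Suc k)) + \<epsilon> k * x i' (Suc k) j)" if "j < N" for j
      using xVI[OF i that, of k] xVI[OF i' that, of k] by blast
    have T1: "0 \<le> (\<theta> i' (Suc k) - \<theta> i (Suc k)) * (H i k + \<epsilon> k * \<theta> i (Suc k))"
      using thVI[OF i, of k] thVI[OF i', of k] by blast
    have T2: "0 \<le> (\<theta> i (Suc k) - \<theta> i' (Suc k)) * (H i' k + \<epsilon> k * \<theta> i' (Suc k))"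
      using thVI[OF i, of k] thVI[OF i', of k] by blast
    show ?thesis
    proof (cases caseA)
      case True
      show ?thesis
      proof (rule uniqA[OF t ab(2) \<epsilon>_pos[rule_format] uw mono'])
        show "\<forall>j<N. 0 \<le> (x i' (Suc k) j - x i (Suc k) j) * (c' j (x i (Suc k) j) - \<theta>hat i (Suc k) + bstar * (\<Sum>l<N. x i (Suc k) l) + bstar * x i (Suc k) j + \<epsilon> k * x i (Suc k) j)"
          using V1 unfolding gradf_A[OF True] by blast
        show "\<forall>j<N. 0 \<le> (x i (Suc k) j - x i' (Suc k) j) * (c' j (x i' (Suc k) j) - \<theta>hat i' (Suc k) + bstar * (\<Sum>l<N. x i' (Suc k) l) + bstar * x i' (Suc k) j + \<epsilon> k * x i' (Suc k) j)"
          using V2 unfolding gradf_A[OF True] by blast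
        show "0 \<le> (\<theta> i' (Suc k) - \<theta> i (Suc k)) * (\<theta>hat i (Suc k) - bstar * (\<Sum>l<N. x i (Suc k) l) - p k + \<epsilon> k * \<theta> i (Suc k))"
          using T1 unfolding H_def if_P[OF True] hA[OF True] .
        show "0 \<le> (\<theta> i (Suc k) - \<theta> i' (Suc k)) * (\<theta>hat i' (Suc k) - bstar * (\<Sum>l<N. x i' (Suc k) l) - p k + \<epsilon> k * \<theta> i' (Suc k))"
          using T2 unfolding H_def if_P[OF True] hA[OF True] .
      qed
    next
      case False
      show ?thesis
      proof (rule uniqB[OF t upos[OF i refl] upos[OF i' eqv[symmetric]] \<epsilon>_pos[rule_format] uw _ _ mono'])
        show "\<forall>j<N. 0 \<le> x i (Suc k) j" using xnn i by blast
        show "\<forall>j<N. 0 \<le> x i' (Suc k) j" using xnn i' by blast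
        show "\<forall>j<N. 0 \<le> (x i' (Suc k) j - x i (Suc k) j) * (c' j (x i (Suc k) j) - astar + \<theta>hat i (Suc k) * (\<Sum>l<N. x i (Suc k) l) + \<theta>hat i (Suc k) * x i (Suc k) j + \<epsilon> k * x i (Suc k) j)"
          using V1 unfolding gradf_B[OF False] by blast
        show "\<forall>j<N. 0 \<le> (x i (Suc k) j - x i' (Suc k) j) * (c' j (x i' (Suc k) j) - astar + \<theta>hat i' (Suc k) * (\<Sum>l<N. x i' (Suc k) l) + \<theta>hat i' (Suc k) * x i' (Suc k) j + \<epsilon> k * x i' (Suc k) j)"
          using V2 unfolding gradf_B[OF False] by blast
        show "0 \<le> (\<theta> i' (Suc k) - \<theta> i (Suc k)) * (p k - astar + \<theta>hat i (Suc k) * (\<Sum>l<N. x i (Suc k) l) + \<epsilon> k * \<theta> i (Suc k))"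
          using T1 unfolding H_def if_not_P[OF False] hB[OF False] .
        show "0 \<le> (\<theta> i (Suc k) - \<theta> i' (Suc k)) * (p k - astar + \<theta>hat i' (Suc k) * (\<Sum>l<N. x i' (Suc k) l) + \<epsilon> k * \<theta> i' (Suc k))"
          using T2 unfolding H_def if_not_P[OF False] hB[OF False] .
      qed
    qed
  qed
  have N0: "0 < N" using j0 by simp
  have vtval: "\<forall>i<N. vt i (Suc k) = \<theta>s + \<xi> (Suc k)"
    if Q: "\<forall>i<N. vtbar i k = vtbar 0 k \<and> 0 \<le> vtbar i k" for k
  proof (intro allI impI)
    fix i assume i: "i < N"
    have cons: "x j (Suc k) j = x 0 (Suc k) j" if "j < N" for j
      using uniq[OF that N0, of k] Q that by blast
    have consi: "x i (Suc k) j = x 0 (Suc k) j" if "j < N" for j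
      using uniq[OF i N0, of k] Q i that by blast
    have XX: "(\<Sum>j<N. x j (Suc k) j) = (\<Sum>j<N. x i (Suc k) j)"
      using cons consi by (intro sum.cong) auto
    have Xp: "0 < (\<Sum>j<N. x i (Suc k) j)" by (rule Xpos[OF i])
    have ps: "p (Suc k) = (if caseA then (astar + \<xi> (Suc k)) - bstar * (\<Sum>j<N. x i (Suc k) j)
                 else astar - (bstar + \<xi> (Suc k)) * (\<Sum>j<N. x i (Suc k) j))"
      using p_step XX by simp
    have vs: "vt i (Suc k) = (if caseA then p (Suc k) + bstar * (\<Sum>j<N. x i (Suc k) j)
                     else (astar - p (Suc k)) / (\<Sum>j<N. x i (Suc k) j))"
      using vt_def i by simp
    show "vt i (Suc k) = \<theta>s + \<xi> (Suc k)"
    proof (cases caseA)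
      case True
      then show ?thesis using vs ps \<theta>s by simp
    next
      case False
      then have "vt i (Suc k) = ((bstar + \<xi> (Suc k)) * (\<Sum>j<N. x i (Suc k) j)) / (\<Sum>j<N. x i (Suc k) j)"
        using vs ps by simp
      then show ?thesis using Xp \<theta>s False by simp
    qed
  qed
  have Q: "\<forall>i<N. vtbar i k = vtbar 0 k \<and> 0 \<le> vtbar i k" for k
  proof (induction k)
    case 0
    then show ?case using vtbar0 N0 by simp
  next
    case (Suc k)
    have vv: "\<forall>i<N. vt i (Suc k) = \<theta>s + \<xi> (Suc k)" by (rule vtval[OF Suc.IH])
    have "(1::nat) \<le> Suc k" by simp
    then have "\<delta> < \<theta>s + \<xi> (Suc k)" using A8 by blast
    then have pos: "0 < \<theta>s + \<xi> (Suc k)" using \<delta> by linarith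
    have st: "vtbar i (Suc k) = (real k * vtbar i k + (\<theta>s + \<xi> (Suc k))) / real (Suc k)" if "i < N" for i
      using vtbar_step[rule_format, OF that, of "Suc k"] vv that by simp
    show ?case
    proof (intro allI impI conjI)
      fix i assume i: "i < N"
      have e: "vtbar i k = vtbar 0 k" using Suc.IH i by blast
      show "vtbar i (Suc k) = vtbar 0 (Suc k)" by (simp only: st[OF i] st[OF N0] e)
      have "0 \<le> vtbar i k" using Suc.IH i by blast
      then have "0 \<le> real k * vtbar i k" by simp
      then show "0 \<le> vtbar i (Suc k)" using st[OF i] pos by simp
    qed
  qed
  have vtall: "\<forall>i<N. vt i (Suc k) = \<theta>s + \<xi> (Suc k)" for k by (rule vtval[OF Q])
  have VS: "real k * vtbar i k = (\<Sum>m\<in>{1..k}. \<theta>s + \<xi> m)" if i: "i < N" for i k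
  proof (induction k)
    case 0
    then show ?case by simp
  next
    case (Suc k)
    have "vtbar i (Suc k) = (real k * vtbar i k + vt i (Suc k)) / real (Suc k)"
      using vtbar_step[rule_format, OF i, of "Suc k"] by simp
    then have "real (Suc k) * vtbar i (Suc k) = real k * vtbar i k + vt i (Suc k)"
      by (simp add: field_simps)
    also have "\<dots> = (\<Sum>m\<in>{1..k}. \<theta>s + \<xi> m) + (\<theta>s + \<xi> (Suc k))" using Suc.IH vtall i by simp
    also have "\<dots> = (\<Sum>m\<in>{1..Suc k}. \<theta>s + \<xi> m)" by simp
    finally show ?case .
  qed
  have vtbar_lim: "(\<lambda>k. vtbar i k) \<longlonglongrightarrow> \<theta>s" if i: "i < N" for i
  proof -
    have ev: "eventually (\<lambda>k. \<theta>s + (\<Sum>m\<in>{1..k}. \<xi> m) / real k = vtbar i k) sequentially"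
      unfolding eventually_sequentially
    proof (intro exI allI impI)
      fix k :: nat assume k: "1 \<le> k"
      have "real k * vtbar i k = real k * \<theta>s + (\<Sum>m\<in>{1..k}. \<xi> m)"
        using VS[OF i, of k] by (simp add: sum.distrib)
      then show "\<theta>s + (\<Sum>m\<in>{1..k}. \<xi> m) / real k = vtbar i k" using k by (simp add: field_simps)
    qed
    have "(\<lambda>k. \<theta>s + (\<Sum>m\<in>{1..k}. \<xi> m) / real k) \<longlonglongrightarrow> \<theta>s + 0"
      by (intro tendsto_intros slln)
    then show ?thesis using tendsto_cong[OF ev] by simp
  qed
  have thlim: "(\<lambda>k. \<theta>hat i (Suc k)) \<longlonglongrightarrow> \<theta>s" if i: "i < N" for i
  proof -
    have a: "(\<lambda>k. \<theta> i (Suc k) / real (Suc k)) \<longlonglongrightarrow> 0"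
    proof (rule tendsto_sandwich[of "\<lambda>k. \<delta> * inverse (real (Suc k))" _ _ "\<lambda>k. \<Delta> * inverse (real (Suc k))"])
      show "eventually (\<lambda>k. \<delta> * inverse (real (Suc k)) \<le> \<theta> i (Suc k) / real (Suc k)) sequentially"
        using thVI[OF i] by (simp add: divide_inverse mult_right_mono)
      show "eventually (\<lambda>k. \<theta> i (Suc k) / real (Suc k) \<le> \<Delta> * inverse (real (Suc k))) sequentially"
        using thVI[OF i] by (simp add: divide_inverse mult_right_mono)
      show "(\<lambda>k. \<delta> * inverse (real (Suc k))) \<longlonglongrightarrow> 0"
        using tendsto_mult[OF tendsto_const LIMSEQ_inverse_real_of_nat, of \<delta>] by simp
      show "(\<lambda>k. \<Delta> * inverse (real (Suc k))) \<longlonglongrightarrow> 0"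
        using tendsto_mult[OF tendsto_const LIMSEQ_inverse_real_of_nat, of \<Delta>] by simp
    qed
    have b: "(\<lambda>k. real k / real (Suc k) * vtbar i k) \<longlonglongrightarrow> 1 * \<theta>s"
      by (intro tendsto_mult LIMSEQ_n_over_Suc_n vtbar_lim[OF i])
    have "(\<lambda>k. \<theta> i (Suc k) / real (Suc k) + real k / real (Suc k) * vtbar i k) \<longlonglongrightarrow> 0 + 1 * \<theta>s"
      by (intro tendsto_add a b)
    then show ?thesis using \<theta>hat_def i by simp
  qed
  have "\<forall>j\<in>{..<N}. \<exists>a. \<forall>v\<in>K j. \<bar>v\<bar> \<le> a"
  proof
    fix j assume "j \<in> {..<N}"
    then have "bounded (K j)" using K by auto
    then show "\<exists>a. \<forall>v\<in>K j. \<bar>v\<bar> \<le> a" unfolding bounded_iff by simp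
  qed
  from bchoice[OF this] obtain Bf where Bf0: "\<forall>j\<in>{..<N}. \<forall>v\<in>K j. \<bar>v\<bar> \<le> Bf j" by blast
  have Bf: "\<forall>j<N. \<forall>v\<in>K j. \<bar>v\<bar> \<le> Bf j" using Bf0 by simp
  define B where "B = (\<Sum>j<N. \<bar>Bf j\<bar>)"
  have B0: "0 \<le> B" by (simp add: B_def sum_nonneg)
  have Bd: "\<forall>j<N. \<forall>v\<in>K j. \<bar>v\<bar> \<le> B"
  proof (intro allI impI ballI)
    fix j v assume j: "j < N" and v: "v \<in> K j"
    have "\<bar>Bf j\<bar> \<le> B" unfolding B_def using j by (intro member_le_sum) auto
    then show "\<bar>v\<bar> \<le> B" using Bf j v by fastforce
  qed
  show ?thesis
  proof (intro allI impI)
    fix i assume i: "i < N"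
    have C1: "(\<lambda>k. \<theta>hat i k) \<longlonglongrightarrow> \<theta>s" using LIMSEQ_imp_Suc[OF thlim[OF i]] .
    have xc: "\<forall>j<N. (\<lambda>k. x i (Suc k) j) \<longlonglongrightarrow> xs j"
    proof (rule tik_conv[OF ab(2) B0 Bd _ _ xs_K xs_VI mono _ \<epsilon>_lim])
      show "\<forall>k. \<forall>j<N. x i (Suc k) j \<in> K j"
      proof (intro allI impI)
        fix k j assume j: "j < N"
        show "x i (Suc k) j \<in> K j" using xVI[OF i j, of k] by (rule conjunct1)
      qed
      show "\<forall>k. \<forall>j<N. 0 \<le> (xs j - x i (Suc k) j) * (gradf caseA astar bstar c' N j (x i (Suc k)) (\<theta>hat i (Suc k)) + \<epsilon> k * x i (Suc k) j)"
      proof (intro allI impI)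
        fix k j assume j: "j < N"
        have "\<forall>z\<in>K j. 0 \<le> (z - x i (Suc k) j) * (gradf caseA astar bstar c' N j (x i (Suc k)) (\<theta>hat i (Suc k)) + \<epsilon> k * x i (Suc k) j)"
          using xVI[OF i j, of k] by (rule conjunct2)
        moreover have "xs j \<in> K j" using xs_K j by simp
        ultimately show "0 \<le> (xs j - x i (Suc k) j) * (gradf caseA astar bstar c' N j (x i (Suc k)) (\<theta>hat i (Suc k)) + \<epsilon> k * x i (Suc k) j)"
          by (rule bspec)
      qed
      show "(\<lambda>k. \<theta>hat i (Suc k)) \<longlonglongrightarrow> (if caseA then astar else bstar)" using thlim[OF i] \<theta>s by simp
    qed
    have C2: "\<forall>j<N. (\<lambda>k. x i k j) \<longlonglongrightarrow> xs j"
    proof (intro allI impI)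
      fix j assume j: "j < N"
      have "(\<lambda>k. x i (Suc k) j) \<longlonglongrightarrow> xs j" using xc j by simp
      then show "(\<lambda>k. x i k j) \<longlonglongrightarrow> xs j" by (rule LIMSEQ_imp_Suc)
    qed
    show "(\<lambda>k. \<theta>hat i k) \<longlonglongrightarrow> \<theta>s \<and> (\<forall>j<N. (\<lambda>k. x i k j) \<longlonglongrightarrow> xs j)"
      using C1 C2 by (rule conjI)
  qed
qed


theorem theorem3:
  fixes M :: "'a measure" and N :: nat
    and K :: "nat \<Rightarrow> real set" and c c' :: "nat \<Rightarrow> real \<Rightarrow> real"
    and astar bstar \<delta> \<Delta> \<gamma>x \<gamma>\<theta> :: real and \<epsilon> :: "nat \<Rightarrow> real" and caseA :: bool
    and \<xi> :: "nat \<Rightarrow> 'a \<Rightarrow> real"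
    and x :: "'a \<Rightarrow> nat \<Rightarrow> nat \<Rightarrow> nat \<Rightarrow> real"
    and \<theta> \<theta>hat vt vtbar :: "'a \<Rightarrow> nat \<Rightarrow> nat \<Rightarrow> real"
    and p :: "'a \<Rightarrow> nat \<Rightarrow> real"
    and xs :: "nat \<Rightarrow> real"
  defines "\<theta>star \<equiv> (if caseA then astar else bstar)"
  assumes M: "prob_space M"
    and ab: "0 < astar" "0 < bstar"
    \<comment> \<open>noise: xi^1, xi^2, ... i.i.d., mean zero\<close>
    and \<xi>_meas: "\<forall>k\<ge>1. \<xi> k \<in> borel_measurable M"
    and \<xi>_indep: "prob_space.indep_vars M (\<lambda>_. borel) \<xi> {1..}"
    and \<xi>_ident: "\<forall>k\<ge>1. distr M borel (\<xi> k) = distr M borel (\<xi> 1)"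
    and \<xi>_int: "integrable M (\<xi> 1)"
    and \<xi>_mean: "(\<integral>\<omega>. \<xi> 1 \<omega> \<partial>M) = 0"
    \<comment> \<open>(A7): sets K_j and cost functions\<close>
    and K: "\<forall>j<N. K j \<noteq> {} \<and> closed (K j) \<and> convex (K j) \<and> bounded (K j) \<and> K j \<subseteq> {0..}"
    and Kpos: "\<exists>j<N. \<forall>v\<in>K j. 0 < v"
    and c_conv: "\<forall>j<N. convex_on (K j) (c j)"
    and c_deriv: "\<forall>j<N. \<forall>v\<in>K j. (c j has_real_derivative c' j v) (at v)"
    and c'_cont: "\<forall>j<N. continuous_on (K j) (c' j)"
    and c'_lip: "\<forall>j<N. \<exists>L. \<forall>u\<in>K j. \<forall>v\<in>K j. \<bar>c' j u - c' j v\<bar> \<le> L * \<bar>u - v\<bar>"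
    \<comment> \<open>(A8): Theta = [delta, Delta]\<close>
    and \<delta>: "0 < \<delta>"
    and A8: "\<forall>k\<ge>1. \<forall>\<omega>\<in>space M. \<delta> < \<theta>star + \<xi> k \<omega> \<and> \<theta>star + \<xi> k \<omega> < \<Delta>"
    \<comment> \<open>parameters of Algorithm II\<close>
    and \<epsilon>_pos: "\<forall>k. 0 < \<epsilon> k" and \<epsilon>_dec: "decseq \<epsilon>" and \<epsilon>_lim: "\<epsilon> \<longlonglongrightarrow> 0"
    and \<gamma>: "0 < \<gamma>x" "0 < \<gamma>\<theta>"
    \<comment> \<open>Algorithm II: x omega i k = x_i^k (estimate of all outputs by firm i)\<close>
    and p0: "\<forall>\<omega>\<in>space M. p \<omega> 0 = astar - bstar * (\<Sum>j<N. x \<omega> j 0 j)"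
    and vtbar0: "\<forall>\<omega>\<in>space M. \<forall>i<N. vtbar \<omega> i 0 = 0"
    and x_step: "\<forall>\<omega>\<in>space M. \<forall>i<N. \<forall>k. \<forall>j<N.
       x \<omega> i (Suc k) j = closest_point (K j)
         (x \<omega> i (Suc k) j - \<gamma>x * (gradf caseA astar bstar c' N j (x \<omega> i (Suc k)) (\<theta>hat \<omega> i (Suc k))
                                   + \<epsilon> k * x \<omega> i (Suc k) j))"
    and \<theta>_step: "\<forall>\<omega>\<in>space M. \<forall>i<N. \<forall>k.
       \<theta> \<omega> i (Suc k) = closest_point {\<delta>..\<Delta>}
         (\<theta> \<omega> i (Suc k) - \<gamma>\<theta> *
            ((if caseA
              then phat caseA astar bstar (\<theta>hat \<omega> i (Suc k)) (\<Sum>j<N. x \<omega> i (Suc k) j) - p \<omega> k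
              else p \<omega> k - phat caseA astar bstar (\<theta>hat \<omega> i (Suc k)) (\<Sum>j<N. x \<omega> i (Suc k) j))
             + \<epsilon> k * \<theta> \<omega> i (Suc k)))"
    and \<theta>hat_def: "\<forall>\<omega>\<in>space M. \<forall>i<N. \<forall>k.
       \<theta>hat \<omega> i (Suc k) = \<theta> \<omega> i (Suc k) / real (Suc k) + real k / real (Suc k) * vtbar \<omega> i k"
    and p_step: "\<forall>\<omega>\<in>space M. \<forall>k\<ge>1.
       p \<omega> k = (if caseA then (astar + \<xi> k \<omega>) - bstar * (\<Sum>j<N. x \<omega> j k j)
                 else astar - (bstar + \<xi> k \<omega>) * (\<Sum>j<N. x \<omega> j k j))"
    and vt_def: "\<forall>\<omega>\<in>space M. \<forall>i<N. \<forall>k\<ge>1.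
       vt \<omega> i k = (if caseA then p \<omega> k + bstar * (\<Sum>j<N. x \<omega> i k j)
                     else (astar - p \<omega> k) / (\<Sum>j<N. x \<omega> i k j))"
    and vtbar_step: "\<forall>\<omega>\<in>space M. \<forall>i<N. \<forall>k\<ge>1.
       vtbar \<omega> i k = ((real k - 1) * vtbar \<omega> i (k - 1) + vt \<omega> i k) / real k"
    \<comment> \<open>x* solves the variational inequality VI(K, F)\<close>
    and xs_K: "\<forall>j<N. xs j \<in> K j"
    and xs_VI: "\<forall>y. (\<forall>j<N. y j \<in> K j) \<longrightarrow> (\<Sum>j<N. (y j - xs j) * Fvi astar bstar c' N j xs) \<ge> 0"
  shows "\<forall>i<N. (AE \<omega> in M. (\<lambda>k. \<theta>hat \<omega> i k) \<longlonglongrightarrow> \<theta>star)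
              \<and> (AE \<omega> in M. \<forall>j<N. (\<lambda>k. x \<omega> i k j) \<longlonglongrightarrow> xs j)"
proof -
  interpret prob_space M by (rule M)
  have \<theta>s_eq: "\<theta>star = (if caseA then astar else bstar)" by (simp add: \<theta>star_def)
  have AEs: "AE \<omega> in M. (\<lambda>n. (\<Sum>k\<in>{1..n}. \<xi> k \<omega>) / real n) \<longlonglongrightarrow> 0"
  proof (rule slln_bounded[OF M _ \<xi>_indep _ _ \<xi>_mean])
    show "\<And>k. 1 \<le> k \<Longrightarrow> \<xi> k \<in> borel_measurable M" using \<xi>_meas by blast
    show "\<And>k. 1 \<le> k \<Longrightarrow> distr M borel (\<xi> k) = distr M borel (\<xi> 1)" using \<xi>_ident by blast
    show "\<And>k \<omega>. 1 \<le> k \<Longrightarrow> \<omega> \<in> space M \<Longrightarrow> \<delta> - \<theta>star \<le> \<xi> k \<omega> \<and> \<xi> k \<omega> \<le> \<Delta> - \<theta>star"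
    proof -
      fix k :: nat and \<omega> assume k: "1 \<le> k" and \<omega>: "\<omega> \<in> space M"
      have "\<delta> < \<theta>star + \<xi> k \<omega> \<and> \<theta>star + \<xi> k \<omega> < \<Delta>" using A8 k \<omega> by blast
      then show "\<delta> - \<theta>star \<le> \<xi> k \<omega> \<and> \<xi> k \<omega> \<le> \<Delta> - \<theta>star" by linarith
    qed
  qed
  have D: "\<forall>i<N. (\<lambda>k. \<theta>hat \<omega> i k) \<longlonglongrightarrow> \<theta>star \<and> (\<forall>j<N. (\<lambda>k. x \<omega> i k j) \<longlonglongrightarrow> xs j)"
    if \<omega>: "\<omega> \<in> space M" and sl: "(\<lambda>n. (\<Sum>k\<in>{1..n}. \<xi> k \<omega>) / real n) \<longlonglongrightarrow> 0" for \<omega>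
  proof -
    have A8': "\<forall>k\<ge>1. \<delta> < \<theta>star + \<xi> k \<omega> \<and> \<theta>star + \<xi> k \<omega> < \<Delta>" using A8 \<omega> by blast
    show ?thesis
      by (rule det_main[where x="x \<omega>" and \<theta>="\<theta> \<omega>" and \<theta>hat="\<theta>hat \<omega>" and vt="vt \<omega>"
        and vtbar="vtbar \<omega>" and p="p \<omega>" and \<xi>="\<lambda>k::nat. \<xi> k \<omega>" and \<theta>s=\<theta>star,
        OF \<theta>s_eq ab(1) ab(2) K Kpos c_conv c_deriv \<delta> A8' sl \<epsilon>_pos \<epsilon>_lim \<gamma>(1) \<gamma>(2)
        bspec[OF vtbar0 \<omega>] bspec[OF x_step \<omega>] bspec[OF \<theta>_step \<omega>] bspec[OF \<theta>hat_def \<omega>]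
        bspec[OF p_step \<omega>] bspec[OF vt_def \<omega>] bspec[OF vtbar_step \<omega>] xs_K xs_VI])
  qed
  have AEall: "AE \<omega> in M. \<forall>i<N. (\<lambda>k. \<theta>hat \<omega> i k) \<longlonglongrightarrow> \<theta>star \<and> (\<forall>j<N. (\<lambda>k. x \<omega> i k j) \<longlonglongrightarrow> xs j)"
  proof (rule AE_mp[OF AEs AE_I2])
    fix \<omega> assume \<omega>: "\<omega> \<in> space M"
    show "(\<lambda>n. (\<Sum>k\<in>{1..n}. \<xi> k \<omega>) / real n) \<longlonglongrightarrow> 0 \<longrightarrow>
      (\<forall>i<N. (\<lambda>k. \<theta>hat \<omega> i k) \<longlonglongrightarrow> \<theta>star \<and> (\<forall>j<N. (\<lambda>k. x \<omega> i k j) \<longlonglongrightarrow> xs j))"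
      using D[OF \<omega>] by blast
  qed
  show ?thesis
  proof (intro allI impI conjI)
    fix i assume i: "i < N"
    show "AE \<omega> in M. (\<lambda>k. \<theta>hat \<omega> i k) \<longlonglongrightarrow> \<theta>star"
      using AEall by (rule eventually_mono) (use i in blast)
    show "AE \<omega> in M. \<forall>j<N. (\<lambda>k. x \<omega> i k j) \<longlonglongrightarrow> xs j"
      using AEall by (rule eventually_mono) (use i in blast)
  qed
qed

end
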